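(* Let $f,g:\mathbb{R}^{N}\rightarrow [-\infty ,\infty ]$ be Borel measurable with $g\geq 0$, $f\not\equiv \infty$ and $g\not\equiv\infty$, so that $0\leq m_{f_{+}}+m_{g}<\infty$, where $f_{+}:=\max\{f,0\}$, $m_{f_+}:=\inf f_+$, $m_g:=\inf g$. Set $m_{f_{+},g}:=(m_{f_{+}}-m_{g})/2$. Then $f_{+}-m_{f_{+},g}$, $g+m_{f_{+},g}$ and $f\veebar g$ are measurable and nonnegative, and $$\|(f_{+}-m_{f_{+},g})^{-1}\|_{\phi }+\|(g+m_{f_{+},g})^{-1}\|_{\phi }\leq 4\|(f\veebar g)^{-1}\|_{\phi }$$ for every Young function $\phi$.
   Context: $(f\veebar g)(x):=\inf_{y\in\mathbb{R}^N}\max\{f(x-y),g(y)\}$. For $h\ge0$, $h^{-1}:=1/h$ (with $1/0=\infty$, $1/\infty=0$). A Young function is a nonconstant $\phi:[0,\infty]\to[0,\infty]$ with $\phi(0)=0$, nondecreasing, convex and left continuous; the Luxemburg norm of a measurable $h$ is $\|h\|_{\phi}:=\inf\{r>0:\int_{\mathbb{R}^N}\phi(r^{-1}|h|)\le 1\}$ ($=\infty$ if no such $r$). Measurability means Lebesgue measurability. *)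

theory Defs
  imports "HOL-Analysis.Analysis"
begin

definition maxconv :: "('a::euclidean_space \<Rightarrow> ereal) \<Rightarrow> ('a \<Rightarrow> ereal) \<Rightarrow> 'a \<Rightarrow> ereal" where
  "maxconv f g x = (INF y. max (f (x - y)) (g y))"

text \<open>Reciprocal of a nonnegative extended real: ereal inverse has 1/0 = \<infinity>, 1/\<infinity> = 0;
  the result is viewed in [0,\<infinity>] (ennreal).\<close>
definition recip :: "ereal \<Rightarrow> ennreal" where
  "recip h = e2ennreal (inverse h)"

definition young :: "(ennreal \<Rightarrow> ennreal) \<Rightarrow> bool" where
  "young \<phi> \<longleftrightarrow>
     (\<exists>a b. \<phi> a \<noteq> \<phi> b) \<and> \<phi> 0 = 0 \<and> mono \<phi> \<and>
     (\<forall>a b. \<forall>t::real. 0 \<le> t \<and> t \<le> 1 \<longrightarrow>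
        \<phi> (ennreal t * a + ennreal (1 - t) * b) \<le> ennreal t * \<phi> a + ennreal (1 - t) * \<phi> b) \<and>
     (\<forall>x. continuous (at_left x) \<phi>)"

text \<open>Luxemburg norm w.r.t. Lebesgue measure; Inf of the empty set is \<infinity>.\<close>
definition luxemburg :: "(ennreal \<Rightarrow> ennreal) \<Rightarrow> ('a::euclidean_space \<Rightarrow> ennreal) \<Rightarrow> ennreal" where
  "luxemburg \<phi> h =
     Inf (ennreal ` {r::real. r > 0 \<and> (\<integral>\<^sup>+ x. \<phi> (ennreal (1 / r) * h x) \<partial>lebesgue) \<le> 1})"

end

theory Submission
  imports Defs "HOL-Analysis.Analysis"
begin


definition pre :: "(nat \<Rightarrow> nat) \<Rightarrow> nat \<Rightarrow> nat list" where
  "pre \<sigma> n = map \<sigma> [0..<n]"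

definition suslin :: "'a::euclidean_space set \<Rightarrow> bool" where
  "suslin E \<longleftrightarrow> (\<exists>K. (\<forall>s. compact (K s)) \<and> E = (\<Union>\<sigma>. \<Inter>n. K (pre \<sigma> (Suc n))))"

lemma suslin_compact: "compact C \<Longrightarrow> suslin C"
  unfolding suslin_def by (rule exI[of _ "\<lambda>_. C"]) auto

lemma pre_Suc_Cons: "pre \<sigma> (Suc n) = \<sigma> 0 # map \<sigma> [Suc 0..<Suc n]"
  unfolding pre_def by (simp del: upt_Suc add: upt_conv_Cons)

lemma map_upd0: "map (\<sigma>(0:=v)) [Suc 0..<m] = map \<sigma> [Suc 0..<m]"
  by (rule map_cong) auto

lemma suslin_UN:
  assumes "\<And>i::nat. suslin (A i)"
  shows "suslin (\<Union>i. A i)"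
proof -
  from assms obtain K where K: "\<And>i s. compact (K i s)"
    and A: "\<And>i. A i = (\<Union>\<sigma>. \<Inter>n. K i (pre \<sigma> (Suc n)))"
    unfolding suslin_def by metis
  define K' where "K' s = K (fst (prod_decode (hd s))) (snd (prod_decode (hd s)) # tl s)" for s
  have eq: "K' (pre \<sigma> (Suc n)) = K (fst (prod_decode (\<sigma> 0))) (pre (\<sigma>(0:= snd (prod_decode (\<sigma> 0)))) (Suc n))"
    for \<sigma> n
    unfolding K'_def pre_Suc_Cons by (simp only: map_upd0 list.sel fun_upd_same)
  have "(\<Union>i. A i) = (\<Union>\<sigma>. \<Inter>n. K' (pre \<sigma> (Suc n)))"
  proof (intro equalityI subsetI)
    fix x assume "x \<in> (\<Union>i. A i)"
    then obtain i where "x \<in> A i" by blast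
    then obtain \<tau> where x: "\<And>n. x \<in> K i (pre \<tau> (Suc n))" by (subst (asm) A) blast
    define \<sigma> where "\<sigma> = \<tau>(0 := prod_encode (i, \<tau> 0))"
    have "\<sigma>(0:= snd (prod_decode (\<sigma> 0))) = \<tau>" "fst (prod_decode (\<sigma> 0)) = i"
      by (auto simp: \<sigma>_def)
    then have "\<And>n. x \<in> K' (pre \<sigma> (Suc n))" using x by (simp add: eq)
    then show "x \<in> (\<Union>\<sigma>. \<Inter>n. K' (pre \<sigma> (Suc n)))" by blast
  next
    fix x assume "x \<in> (\<Union>\<sigma>. \<Inter>n. K' (pre \<sigma> (Suc n)))"
    then obtain \<sigma> where "\<And>n. x \<in> K' (pre \<sigma> (Suc n))" by blast
    then have "\<And>n. x \<in> K (fst (prod_decode (\<sigma> 0))) (pre (\<sigma>(0:= snd (prod_decode (\<sigma> 0)))) (Suc n))"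
      by (simp add: eq)
    then have "x \<in> A (fst (prod_decode (\<sigma> 0)))" by (subst A) blast
    then show "x \<in> (\<Union>i. A i)" by blast
  qed
  moreover have "\<forall>s. compact (K' s)" unfolding K'_def using K by blast
  ultimately show ?thesis unfolding suslin_def by (intro exI[of _ K']) (rule conj_commute[THEN iffD1], rule conjI)
qed

lemma prod_encode_mono2: "j \<le> n \<Longrightarrow> prod_encode (i, j) \<le> prod_encode (i, n)"
  by (simp add: prod_encode_def triangle_def) (intro add_mono div_le_mono mult_le_mono; simp)

lemma suslin_INT:
  assumes "\<And>i::nat. suslin (A i)"
  shows "suslin (\<Inter>i. A i)"
proof -
  from assms obtain K where K: "\<And>i s. compact (K i s)"
    and A: "\<And>i. A i = (\<Union>\<sigma>. \<Inter>n. K i (pre \<sigma> (Suc n)))"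
    unfolding suslin_def by metis
  define K' where "K' s = K (fst (prod_decode (length s - 1)))
     (map (\<lambda>j. s ! prod_encode (fst (prod_decode (length s - 1)), j)) [0..<Suc (snd (prod_decode (length s - 1)))])" for s
  define tau where "tau \<sigma> i j = \<sigma> (prod_encode (i, j))" for \<sigma> :: "nat \<Rightarrow> nat" and i j
  have eq: "K' (pre \<sigma> (Suc (prod_encode (i, n)))) = K i (pre (tau \<sigma> i) (Suc n))" for \<sigma> i n
  proof -
    have mm: "map (\<lambda>j. pre \<sigma> (Suc (prod_encode (i, n))) ! prod_encode (i, j)) [0..<Suc n]
       = map (tau \<sigma> i) [0..<Suc n]"
    proof (rule map_cong)
      fix j assume "j \<in> set [0..<Suc n]"
      then have "j \<le> n" by (simp del: upt_Suc)
      then have "prod_encode (i, j) < Suc (prod_encode (i, n))"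
        using prod_encode_mono2[of j n i] by (simp add: le_imp_less_Suc)
      then show "pre \<sigma> (Suc (prod_encode (i, n))) ! prod_encode (i, j) = tau \<sigma> i j"
        unfolding pre_def tau_def by (simp del: upt_Suc)
    qed simp
    have len: "length (pre \<sigma> (Suc (prod_encode (i, n)))) - 1 = prod_encode (i,n)" by (simp add: pre_def)
    show ?thesis by (simp only: K'_def len prod_encode_inverse fst_conv snd_conv mm) (simp add: pre_def)
  qed
  have mem: "(\<forall>N. x \<in> K' (pre \<sigma> (Suc N))) \<longleftrightarrow> (\<forall>i n. x \<in> K i (pre (tau \<sigma> i) (Suc n)))" for x \<sigma>
  proof
    assume h: "\<forall>N. x \<in> K' (pre \<sigma> (Suc N))"
    show "\<forall>i n. x \<in> K i (pre (tau \<sigma> i) (Suc n))"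
    proof (intro allI)
      fix i n
      have "x \<in> K' (pre \<sigma> (Suc (prod_encode (i, n))))" using h by blast
      then show "x \<in> K i (pre (tau \<sigma> i) (Suc n))" by (simp only: eq)
    qed
  next
    assume h: "\<forall>i n. x \<in> K i (pre (tau \<sigma> i) (Suc n))"
    show "\<forall>N. x \<in> K' (pre \<sigma> (Suc N))"
    proof
      fix N
      obtain i n where "N = prod_encode (i, n)" by (metis prod_decode_inverse surj_pair)
      then show "x \<in> K' (pre \<sigma> (Suc N))" using h eq by simp
    qed
  qed
  have "(\<Inter>i. A i) = (\<Union>\<sigma>. \<Inter>n. K' (pre \<sigma> (Suc n)))"
  proof (intro equalityI subsetI)
    fix x assume x: "x \<in> (\<Inter>i. A i)"
    have "\<forall>i. \<exists>\<tau>. \<forall>n. x \<in> K i (pre \<tau> (Suc n))"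
    proof
      fix i
      from x have "x \<in> A i" by blast
      then show "\<exists>\<tau>. \<forall>n. x \<in> K i (pre \<tau> (Suc n))" by (subst (asm) A) blast
    qed
    then have "\<exists>\<tau>. \<forall>i. \<forall>n. x \<in> K i (pre (\<tau> i) (Suc n))" by (rule choice)
    then obtain \<tau> where t: "\<And>i n. x \<in> K i (pre (\<tau> i) (Suc n))" by blast
    define \<sigma> where "\<sigma> N = \<tau> (fst (prod_decode N)) (snd (prod_decode N))" for N
    have "tau \<sigma> i = \<tau> i" for i by (simp add: tau_def \<sigma>_def fun_eq_iff)
    then have "\<forall>N. x \<in> K' (pre \<sigma> (Suc N))" by (subst mem) (simp add: t)
    then show "x \<in> (\<Union>\<sigma>. \<Inter>n. K' (pre \<sigma> (Suc n)))" by blast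
  next
    fix x assume "x \<in> (\<Union>\<sigma>. \<Inter>n. K' (pre \<sigma> (Suc n)))"
    then obtain \<sigma> where "\<forall>N. x \<in> K' (pre \<sigma> (Suc N))" by blast
    then have h: "\<forall>i n. x \<in> K i (pre (tau \<sigma> i) (Suc n))" using mem by blast
    show "x \<in> (\<Inter>i. A i)"
    proof
      fix i show "x \<in> A i" using h by (subst A) blast
    qed
  qed
  moreover have "\<forall>s. compact (K' s)" unfolding K'_def using K by blast
  ultimately show ?thesis unfolding suslin_def by (intro exI[of _ K']) (rule conj_commute[THEN iffD1], rule conjI)
qed


lemma take_pre: "j \<le> m \<Longrightarrow> take j (pre \<sigma> m) = pre \<sigma> j"
  unfolding pre_def by (simp add: take_map)

lemma length_pre[simp]: "length (pre \<sigma> n) = n"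
  unfolding pre_def by simp

lemma map_pre: "map f (pre \<sigma> n) = pre (f \<circ> \<sigma>) n"
  unfolding pre_def by simp

lemma suslin_mono_scheme:
  assumes "suslin A"
  shows "\<exists>K. (\<forall>s. compact (K s)) \<and> (\<forall>\<sigma> n. K (pre \<sigma> (Suc (Suc n))) \<subseteq> K (pre \<sigma> (Suc n)))
    \<and> A = (\<Union>\<sigma>. \<Inter>n. K (pre \<sigma> (Suc n)))"
proof -
  from assms obtain K where K: "\<And>s. compact (K s)" and A: "A = (\<Union>\<sigma>. \<Inter>n. K (pre \<sigma> (Suc n)))"
    unfolding suslin_def by blast
  define K' where "K' s = K (take 1 s) \<inter> (\<Inter>j\<in>{1..length s}. K (take j s))" for s
  have cK: "\<forall>s. compact (K' s)"
  proof
    fix s show "compact (K' s)" unfolding K'_def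
      by (rule compact_Int_closed[OF K closed_INT]) (simp add: compact_imp_closed K)
  qed
  have eq: "K' (pre \<sigma> (Suc n)) = (\<Inter>j\<in>{1..Suc n}. K (pre \<sigma> j))" for \<sigma> n
  proof -
    have "K' (pre \<sigma> (Suc n)) = K (pre \<sigma> 1) \<inter> (\<Inter>j\<in>{1..Suc n}. K (pre \<sigma> j))"
      unfolding K'_def by (simp add: take_pre length_pre del: upt_Suc)
    also have "\<dots> = (\<Inter>j\<in>{1..Suc n}. K (pre \<sigma> j))" by auto
    finally show ?thesis .
  qed
  have mono: "\<forall>\<sigma> n. K' (pre \<sigma> (Suc (Suc n))) \<subseteq> K' (pre \<sigma> (Suc n))"
    unfolding eq by auto
  have same: "(\<Inter>n. K' (pre \<sigma> (Suc n))) = (\<Inter>n. K (pre \<sigma> (Suc n)))" for \<sigma>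
  proof (intro equalityI subsetI)
    fix x assume h: "x \<in> (\<Inter>n. K' (pre \<sigma> (Suc n)))"
    show "x \<in> (\<Inter>n. K (pre \<sigma> (Suc n)))"
    proof
      fix n have "x \<in> K' (pre \<sigma> (Suc n))" using h by blast
      then show "x \<in> K (pre \<sigma> (Suc n))" unfolding eq by auto
    qed
  next
    fix x assume h: "x \<in> (\<Inter>n. K (pre \<sigma> (Suc n)))"
    show "x \<in> (\<Inter>n. K' (pre \<sigma> (Suc n)))"
    proof
      fix n
      have "x \<in> K (pre \<sigma> j)" if "j \<in> {1..Suc n}" for j
      proof -
        from that obtain k where "j = Suc k" by (cases j) auto
        then show ?thesis using h by auto
      qed
      then show "x \<in> K' (pre \<sigma> (Suc n))" unfolding eq by blast
    qed
  qed
  have "A = (\<Union>\<sigma>. \<Inter>n. K' (pre \<sigma> (Suc n)))" unfolding A same ..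
  with cK mono show ?thesis by blast
qed

lemma INT_sums_decseq:
  fixes P Q :: "nat \<Rightarrow> 'a::euclidean_space set"
  assumes cP: "\<And>n. compact (P n)" and cQ: "\<And>n. compact (Q n)"
    and mP: "\<And>n. P (Suc n) \<subseteq> P n" and mQ: "\<And>n. Q (Suc n) \<subseteq> Q n"
  shows "(\<Inter>n. {a + b | a b. a \<in> P n \<and> b \<in> Q n}) = {a + b | a b. a \<in> (\<Inter>n. P n) \<and> b \<in> (\<Inter>n. Q n)}"
proof (intro equalityI subsetI)
  fix z assume z: "z \<in> (\<Inter>n. {a + b | a b. a \<in> P n \<and> b \<in> Q n})"
  define C where "C n = P n \<inter> (\<lambda>b. z - b) ` Q n" for n
  have "compact (C n)" for n
    unfolding C_def
    by (intro compact_Int cP compact_continuous_image continuous_intros cQ)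
  moreover have "C n \<noteq> {}" for n
  proof -
    from z obtain a b where "a \<in> P n" "b \<in> Q n" "z = a + b" by blast
    then have "a \<in> C n" unfolding C_def by (auto intro!: image_eqI[of _ _ b])
    then show ?thesis by blast
  qed
  moreover have "C n \<subseteq> C m" if "m \<le> n" for m n
  proof -
    have "P n \<subseteq> P m" using lift_Suc_antimono_le[of P, OF mP that] .
    moreover have "Q n \<subseteq> Q m" using lift_Suc_antimono_le[of Q, OF mQ that] .
    ultimately show ?thesis unfolding C_def by auto
  qed
  ultimately have "\<Inter>(range C) \<noteq> {}" by (rule compact_nest)
  then obtain a where a: "\<And>n. a \<in> C n" by blast
  have "a \<in> (\<Inter>n. P n)" using a unfolding C_def by blast
  moreover have "z - a \<in> (\<Inter>n. Q n)"
  proof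
    fix n from a[of n] obtain b where "b \<in> Q n" "a = z - b" unfolding C_def by blast
    then show "z - a \<in> Q n" by simp
  qed
  moreover have "z = a + (z - a)" by simp
  ultimately show "z \<in> {a + b | a b. a \<in> (\<Inter>n. P n) \<and> b \<in> (\<Inter>n. Q n)}" by blast
qed blast

lemma suslin_plus:
  fixes A B :: "'a::euclidean_space set"
  assumes "suslin A" "suslin B"
  shows "suslin {a + b | a b. a \<in> A \<and> b \<in> B}"
proof -
  obtain K where cK: "\<And>s. compact (K s)" and mK: "\<And>\<sigma> n. K (pre \<sigma> (Suc (Suc n))) \<subseteq> K (pre \<sigma> (Suc n))"
    and A: "A = (\<Union>\<sigma>. \<Inter>n. K (pre \<sigma> (Suc n)))"
    using suslin_mono_scheme[OF assms(1)] by blast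
  obtain L where cL: "\<And>s. compact (L s)" and mL: "\<And>\<sigma> n. L (pre \<sigma> (Suc (Suc n))) \<subseteq> L (pre \<sigma> (Suc n))"
    and B: "B = (\<Union>\<sigma>. \<Inter>n. L (pre \<sigma> (Suc n)))"
    using suslin_mono_scheme[OF assms(2)] by blast
  define M where "M s = {a + b | a b. a \<in> K (map (fst \<circ> prod_decode) s) \<and> b \<in> L (map (snd \<circ> prod_decode) s)}" for s
  have cM: "\<forall>s. compact (M s)" unfolding M_def using cK cL by (auto intro: compact_sums)
  have key: "(\<Inter>n. M (pre \<sigma> (Suc n))) =
      {a + b | a b. a \<in> (\<Inter>n. K (pre (fst \<circ> prod_decode \<circ> \<sigma>) (Suc n))) \<and> b \<in> (\<Inter>n. L (pre (snd \<circ> prod_decode \<circ> \<sigma>) (Suc n)))}" for \<sigma>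
    unfolding M_def map_pre
    by (rule INT_sums_decseq[where P="\<lambda>n. K (pre (fst \<circ> prod_decode \<circ> \<sigma>) (Suc n))"
          and Q="\<lambda>n. L (pre (snd \<circ> prod_decode \<circ> \<sigma>) (Suc n))"]) (auto simp: cK cL mK mL)
  have "{a + b | a b. a \<in> A \<and> b \<in> B} = (\<Union>\<sigma>. \<Inter>n. M (pre \<sigma> (Suc n)))"
  proof (intro equalityI subsetI)
    fix z assume "z \<in> {a + b | a b. a \<in> A \<and> b \<in> B}"
    then obtain a b where z: "z = a + b" and "a \<in> A" "b \<in> B" by blast
    then obtain \<sigma>1 \<sigma>2 where a: "a \<in> (\<Inter>n. K (pre \<sigma>1 (Suc n)))" and b: "b \<in> (\<Inter>n. L (pre \<sigma>2 (Suc n)))"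
      unfolding A B by blast
    define \<sigma> where "\<sigma> n = prod_encode (\<sigma>1 n, \<sigma>2 n)" for n
    have "fst \<circ> prod_decode \<circ> \<sigma> = \<sigma>1" "snd \<circ> prod_decode \<circ> \<sigma> = \<sigma>2"
      by (auto simp: \<sigma>_def fun_eq_iff)
    then have "z \<in> (\<Inter>n. M (pre \<sigma> (Suc n)))" unfolding key using a b z by blast
    then show "z \<in> (\<Union>\<sigma>. \<Inter>n. M (pre \<sigma> (Suc n)))" by blast
  next
    fix z assume "z \<in> (\<Union>\<sigma>. \<Inter>n. M (pre \<sigma> (Suc n)))"
    then obtain \<sigma> where "z \<in> (\<Inter>n. M (pre \<sigma> (Suc n)))" by blast
    then obtain a b where "z = a + b" "a \<in> (\<Inter>n. K (pre (fst \<circ> prod_decode \<circ> \<sigma>) (Suc n)))"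
        "b \<in> (\<Inter>n. L (pre (snd \<circ> prod_decode \<circ> \<sigma>) (Suc n)))" unfolding key by blast
    moreover have "a \<in> A" "b \<in> B" using calculation unfolding A B by blast+
    ultimately show "z \<in> {a + b | a b. a \<in> A \<and> b \<in> B}" by blast
  qed
  with cM show ?thesis unfolding suslin_def by (intro exI[of _ M]) simp
qed

lemma suslin_closed:
  fixes F :: "'a::euclidean_space set"
  assumes "closed F" shows "suslin F"
proof -
  have "F = (\<Union>m::nat. F \<inter> cball 0 (real m))"
  proof (intro equalityI subsetI)
    fix x assume "x \<in> F"
    moreover obtain m :: nat where "norm x \<le> real m" using real_arch_simple by blast
    ultimately show "x \<in> (\<Union>m::nat. F \<inter> cball 0 (real m))" by auto
  qed blast
  moreover have "suslin (\<Union>m::nat. F \<inter> cball 0 (real m))"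
    by (intro suslin_UN suslin_compact closed_Int_compact assms compact_cball)
  ultimately show ?thesis by simp
qed

lemma suslin_open:
  fixes S :: "'a::euclidean_space set"
  assumes "open S" shows "suslin S"
proof -
  obtain D where D: "countable D" "\<And>X. X \<in> D \<Longrightarrow> \<exists>a b. X = cbox a b" "\<Union>D = S"
    using open_countable_Union_open_cbox[OF assms] by metis
  show ?thesis
  proof (cases "D = {}")
    case True then show ?thesis using D(3) by (auto intro: suslin_compact)
  next
    case False
    then have r: "range (from_nat_into D) = D" using D(1) by (simp add: range_from_nat_into)
    have "S = (\<Union>n. from_nat_into D n)" using D(3) r by simp
    moreover have "compact (from_nat_into D n)" for n
      using D(2)[OF from_nat_into[OF False, of n]] by auto
    ultimately show ?thesis by (simp add: suslin_UN suslin_compact)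
  qed
qed

lemma borel_suslin:
  fixes S :: "'a::euclidean_space set"
  assumes "S \<in> sets borel" shows "suslin S \<and> suslin (- S)"
proof -
  have "S \<in> sigma_sets UNIV {S. open S}" using assms by (simp add: sets_borel)
  then show ?thesis
  proof induct
    case (Basic a) then show ?case by (simp add: suslin_open suslin_closed closed_Compl)
  next
    case Empty then show ?case by (simp add: suslin_compact suslin_closed)
  next
    case (Compl a) then show ?case by (simp add: Compl_eq_Diff_UNIV[symmetric])
  next
    case (Union a)
    then have "suslin (\<Union>i. a i)" by (intro suslin_UN) blast
    moreover have "suslin (\<Inter>i. - a i)" using Union by (intro suslin_INT) blast
    ultimately show ?case by simp
  qed
qed



lemma suslin_inner:
  fixes K :: "nat list \<Rightarrow> 'a::euclidean_space set"
  assumes cK: "\<And>s. compact (K s)"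
    and E: "E = (\<Union>\<sigma>. \<Inter>n. K (pre \<sigma> (Suc n)))"
    and t: "t < outer_measure_of lebesgue E"
  shows "\<exists>C. closed C \<and> C \<subseteq> E \<and> t \<le> emeasure lebesgue C"
proof -
  define S where "S \<sigma> = (\<Inter>n. K (pre \<sigma> (Suc n)))" for \<sigma>
  define Eb where "Eb bs = (\<Union>\<sigma>\<in>{\<sigma>. \<forall>i<length bs. \<sigma> i \<le> bs ! i}. S \<sigma>)" for bs
  have Eb0: "Eb [] = E" unfolding Eb_def S_def E by simp
  have step: "\<exists>c. t < outer_measure_of lebesgue (Eb (bs @ [c]))"
    if "t < outer_measure_of lebesgue (Eb bs)" for bs
  proof -
    have inc: "incseq (\<lambda>c. Eb (bs @ [c]))"
      unfolding incseq_def
    proof (intro allI impI subsetI)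
      fix m n x assume mn: "m \<le> n" and "x \<in> Eb (bs @ [m])"
      then obtain \<sigma> where x: "x \<in> S \<sigma>" and sb: "\<forall>i<length (bs @ [m]). \<sigma> i \<le> (bs @ [m]) ! i"
        unfolding Eb_def by blast
      have "\<sigma> i \<le> (bs @ [n]) ! i" if "i < length (bs @ [n])" for i
      proof (cases "i < length bs")
        case True then show ?thesis using sb[rule_format, of i] by (simp add: nth_append)
      next
        case False then have "i = length bs" using that by simp
        then show ?thesis using sb[rule_format, of i] mn by (simp add: nth_append)
      qed
      then show "x \<in> Eb (bs @ [n])" unfolding Eb_def using x by blast
    qed
    have un: "(\<Union>c. Eb (bs @ [c])) = Eb bs"
    proof (intro equalityI subsetI)
      fix x assume "x \<in> (\<Union>c. Eb (bs @ [c]))"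
      then obtain c \<sigma> where x: "x \<in> S \<sigma>" and sb: "\<forall>i<length (bs @ [c]). \<sigma> i \<le> (bs @ [c]) ! i"
        unfolding Eb_def by blast
      have "\<sigma> i \<le> bs ! i" if "i < length bs" for i
        using sb[rule_format, of i] that by (simp add: nth_append)
      then show "x \<in> Eb bs" unfolding Eb_def using x by blast
    next
      fix x assume "x \<in> Eb bs"
      then obtain \<sigma> where "x \<in> S \<sigma>" "\<forall>i<length bs. \<sigma> i \<le> bs ! i"
        unfolding Eb_def by blast
      then have "x \<in> Eb (bs @ [\<sigma> (length bs)])" unfolding Eb_def
        by (auto simp: nth_append less_Suc_eq intro!: bexI[of _ \<sigma>])
      then show "x \<in> (\<Union>c. Eb (bs @ [c]))" by blast
    qed
    have "(SUP c. outer_measure_of lebesgue (Eb (bs @ [c]))) = outer_measure_of lebesgue (Eb bs)"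
      using SUP_outer_measure_of_incseq[OF _ inc, of lebesgue] un by simp
    with that have "t < (SUP c. outer_measure_of lebesgue (Eb (bs @ [c])))" by simp
    then show ?thesis unfolding less_SUP_iff by blast
  qed
  define L where "L = rec_nat [] (\<lambda>k l. l @ [SOME c. t < outer_measure_of lebesgue (Eb (l @ [c]))])"
  have L0: "L 0 = []" and LS: "L (Suc k) = L k @ [SOME c. t < outer_measure_of lebesgue (Eb (L k @ [c]))]" for k
    unfolding L_def by simp_all
  have Linv: "t < outer_measure_of lebesgue (Eb (L k)) \<and> length (L k) = k" for k
  proof (induction k)
    case 0 then show ?case using t by (simp add: L0 Eb0)
  next
    case (Suc k)
    then show ?case unfolding LS using step[of "L k"]
        someI_ex[of "\<lambda>c. t < outer_measure_of lebesgue (Eb (L k @ [c]))"] by simp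
  qed
  define b where "b i = L (Suc i) ! i" for i
  have Lb: "i < k \<Longrightarrow> L k ! i = b i" for i k
  proof (induction k)
    case 0 then show ?case by simp
  next
    case (Suc k)
    show ?case
    proof (cases "i < k")
      case True then show ?thesis using Suc Linv[of k] by (simp add: LS nth_append)
    next
      case False then have "i = k" using Suc by simp
      then show ?thesis by (simp add: b_def)
    qed
  qed
  define T where "T s = K (take 1 s) \<inter> (\<Inter>j\<in>{1..length s}. K (take j s))" for s
  have cT: "compact (T s)" for s unfolding T_def
    by (rule compact_Int_closed[OF cK closed_INT]) (simp add: compact_imp_closed cK)
  define Bnd where "Bnd k = {s. length s = k \<and> (\<forall>i<k. s ! i \<le> b i)}" for k
  have fBnd: "finite (Bnd k)" for k
  proof -
    have "Bnd k \<subseteq> {s. set s \<subseteq> {..sum b {..<k}} \<and> length s = k}"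
    proof
      fix s assume "s \<in> Bnd k"
      then have "length s = k" "\<forall>i<k. s ! i \<le> b i" by (auto simp: Bnd_def)
      moreover have "b i \<le> sum b {..<k}" if "i < k" for i
        using that by (intro member_le_sum) auto
      ultimately show "s \<in> {s. set s \<subseteq> {..sum b {..<k}} \<and> length s = k}"
        by (auto simp: in_set_conv_nth) (meson order_trans)
    qed
    then show ?thesis by (rule finite_subset) (intro finite_lists_length_eq finite_atMost)
  qed
  define F where "F k = (\<Union>s\<in>Bnd k. T s)" for k
  have cF: "compact (F k)" for k unfolding F_def using fBnd cT by blast
  have EbF: "Eb (L (Suc k)) \<subseteq> F (Suc k)" for k
  proof
    fix y assume "y \<in> Eb (L (Suc k))"
    then obtain \<sigma> where y: "y \<in> S \<sigma>" and sb: "\<forall>i<Suc k. \<sigma> i \<le> L (Suc k) ! i"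
      unfolding Eb_def using Linv[of "Suc k"] by auto
    have "pre \<sigma> (Suc k) \<in> Bnd (Suc k)"
      unfolding Bnd_def using sb Lb by (auto simp: pre_def simp del: upt_Suc)
    moreover have "y \<in> T (pre \<sigma> (Suc k))"
    proof -
      have "y \<in> K (take j (pre \<sigma> (Suc k)))" if "j \<in> {1..Suc k}" for j
      proof -
        from that obtain j' where j: "j = Suc j'" "j \<le> Suc k" by (cases j) auto
        then show ?thesis using y unfolding S_def by (simp add: take_pre)
      qed
      then show ?thesis unfolding T_def by auto
    qed
    ultimately show "y \<in> F (Suc k)" unfolding F_def by blast
  qed
  have Fdec: "F (Suc (Suc k)) \<subseteq> F (Suc k)" for k
  proof
    fix y assume "y \<in> F (Suc (Suc k))"
    then obtain s where s: "s \<in> Bnd (Suc (Suc k))" "y \<in> T s" unfolding F_def by blast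
    have "take (Suc k) s \<in> Bnd (Suc k)" using s(1) unfolding Bnd_def by auto
    moreover have "y \<in> T (take (Suc k) s)"
      using s unfolding T_def Bnd_def by (auto simp: min_def)
    ultimately show "y \<in> F (Suc k)" unfolding F_def by blast
  qed
  define C where "C = (\<Inter>k. F (Suc k))"
  have closedC: "closed C" unfolding C_def using cF by (simp add: closed_INT compact_imp_closed)
  have tF: "t \<le> emeasure lebesgue (F (Suc k))" for k
  proof -
    have "t < outer_measure_of lebesgue (Eb (L (Suc k)))" using Linv by blast
    also have "\<dots> \<le> outer_measure_of lebesgue (F (Suc k))" by (rule outer_measure_of_mono[OF EbF])
    also have "\<dots> = emeasure lebesgue (F (Suc k))"
      using lmeasurable_compact[OF cF[of "Suc k"]] by (intro outer_measure_of_eq) (simp add: fmeasurable_def)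
    finally show ?thesis by simp
  qed
  have "(INF k. emeasure lebesgue (F (Suc k))) = emeasure lebesgue C"
    unfolding C_def
  proof (rule INF_emeasure_decseq')
    show "F (Suc i) \<in> sets lebesgue" for i using cF lmeasurable_compact by blast
    show "decseq (\<lambda>k. F (Suc k))" using Fdec by (simp add: decseq_Suc_iff)
    show "\<exists>i. emeasure lebesgue (F (Suc i)) \<noteq> \<infinity>"
      using lmeasurable_compact[OF cF[of 1]] unfolding fmeasurable_def by (intro exI[of _ 0]) auto
  qed
  then have tC: "t \<le> emeasure lebesgue C" using tF by (metis le_INF_iff)
  have CE: "C \<subseteq> E"
  proof
    fix x assume "x \<in> C"
    then have xF: "\<And>k. x \<in> F (Suc k)" unfolding C_def by blast
    define good where "good s \<longleftrightarrow> (\<forall>k\<ge>length s. \<exists>u. length u = k \<and> (\<forall>i<k. u ! i \<le> b i)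
        \<and> take (length s) u = s \<and> (\<forall>j\<in>{1..k}. x \<in> K (take j u)))" for s
    have g0: "good []"
      unfolding good_def
    proof (intro allI impI)
      fix k :: nat
      show "\<exists>u. length u = k \<and> (\<forall>i<k. u ! i \<le> b i) \<and> take (length []) u = [] \<and> (\<forall>j\<in>{1..k}. x \<in> K (take j u))"
      proof (cases k)
        case 0 then show ?thesis by auto
      next
        case (Suc k')
        from xF[of k'] obtain s where "s \<in> Bnd (Suc k')" "x \<in> T s" unfolding F_def by blast
        then show ?thesis using Suc unfolding Bnd_def T_def by auto
      qed
    qed
    have gstep: "\<exists>c. good (s @ [c])" if gs: "good s" for s
    proof (rule ccontr)
      assume "\<nexists>c. good (s @ [c])"
      then have "\<forall>c. \<exists>k\<ge>Suc (length s). \<not> (\<exists>u. length u = k \<and> (\<forall>i<k. u ! i \<le> b i)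
        \<and> take (Suc (length s)) u = s @ [c] \<and> (\<forall>j\<in>{1..k}. x \<in> K (take j u)))"
        unfolding good_def by auto
      then obtain kk where kk: "\<And>c. kk c \<ge> Suc (length s)"
        "\<And>c. \<not> (\<exists>u. length u = kk c \<and> (\<forall>i<kk c. u ! i \<le> b i)
          \<and> take (Suc (length s)) u = s @ [c] \<and> (\<forall>j\<in>{1..kk c}. x \<in> K (take j u)))"
        by metis
      define n where "n = length s"
      define k0 where "k0 = Suc n + sum kk {..b n}"
      have "k0 \<ge> length s" unfolding k0_def n_def by simp
      with gs obtain u where u: "length u = k0" "\<forall>i<k0. u ! i \<le> b i" "take n u = s"
        "\<forall>j\<in>{1..k0}. x \<in> K (take j u)" unfolding good_def n_def by blast
      define c where "c = u ! n"
      have "n < k0" unfolding k0_def by simp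
      then have cb: "c \<le> b n" using u(2) unfolding c_def by blast
      have "kk c \<le> sum kk {..b n}" using cb by (intro member_le_sum) auto
      then have kkle: "kk c \<le> k0" unfolding k0_def by simp
      define u' where "u' = take (kk c) u"
      have "length u' = kk c" using kkle u(1) unfolding u'_def by simp
      moreover have "\<forall>i<kk c. u' ! i \<le> b i" using u(2) kkle unfolding u'_def by auto
      moreover have "take (Suc n) u' = s @ [c]"
      proof -
        have "Suc n \<le> kk c" using kk(1) unfolding n_def by blast
        then have "take (Suc n) u' = take (Suc n) u" unfolding u'_def by (simp add: min_def)
        also have "\<dots> = take n u @ [u ! n]" using \<open>n < k0\<close> u(1) by (simp add: take_Suc_conv_app_nth)
        finally show ?thesis using u(3) unfolding c_def by simp
      qed
      moreover have "\<forall>j\<in>{1..kk c}. x \<in> K (take j u')"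
        using u(4) kkle unfolding u'_def by (auto simp: min_def)
      ultimately show False using kk(2)[of c] unfolding n_def by blast
    qed
    define P where "P = rec_nat [] (\<lambda>n p. p @ [SOME c. good (p @ [c])])"
    have P0: "P 0 = []" and PS: "P (Suc n) = P n @ [SOME c. good (P n @ [c])]" for n
      unfolding P_def by simp_all
    have Pg: "good (P n) \<and> length (P n) = n" for n
    proof (induction n)
      case 0 then show ?case using g0 by (simp add: P0)
    next
      case (Suc n) then show ?case unfolding PS using gstep[of "P n"]
          someI_ex[of "\<lambda>c. good (P n @ [c])"] by simp
    qed
    define \<sigma> where "\<sigma> i = P (Suc i) ! i" for i
    have Ppre: "P n = pre \<sigma> n" for n
    proof (induction n)
      case 0 then show ?case by (simp add: P0 pre_def)
    next
      case (Suc n)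
      have "\<sigma> n = (SOME c. good (P n @ [c]))" unfolding \<sigma>_def PS using Pg[of n] by (simp add: nth_append)
      then show ?case using Suc by (simp add: PS pre_def)
    qed
    have "x \<in> K (pre \<sigma> (Suc n))" for n
    proof -
      have "good (P (Suc n))" using Pg by blast
      then obtain u where "length u = Suc n" "take (Suc n) u = P (Suc n)" and
        ku: "\<forall>j\<in>{1..Suc n}. x \<in> K (take j u)" unfolding good_def using Pg[of "Suc n"] by auto
      have "x \<in> K (take (Suc n) u)" using ku[rule_format, of "Suc n"] by simp
      then show ?thesis using \<open>take (Suc n) u = P (Suc n)\<close> Ppre by simp
    qed
    then show "x \<in> E" unfolding E by blast
  qed
  show ?thesis using closedC CE tC by blast
qed



lemma borel_lebesgue_set: "S \<in> sets borel \<Longrightarrow> (S::'a::euclidean_space set) \<in> sets lebesgue"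
  by (metis sets_completionI_sets sets_lborel)

lemma closed_lebesgue_set: "closed S \<Longrightarrow> (S::'a::euclidean_space set) \<in> sets lebesgue"
  by (simp add: borel_lebesgue_set borel_closed)

lemma suslin_bounded_lmeas:
  fixes E :: "'a::euclidean_space set"
  assumes "suslin E" and Eb: "E \<subseteq> cball 0 r"
  shows "E \<in> sets lebesgue"
proof -
  obtain K where cK: "\<And>s. compact (K s)" and E: "E = (\<Union>\<sigma>. \<Inter>n. K (pre \<sigma> (Suc n)))"
    using assms(1) unfolding suslin_def by blast
  obtain H where H: "H \<in> sets lebesgue" "E \<subseteq> H" "outer_measure_of lebesgue E = emeasure lebesgue H"
    using outer_measure_of_attain[of E lebesgue] by auto
  define H' where "H' = H \<inter> cball 0 r"
  have H'm: "H' \<in> lmeasurable"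
    unfolding H'_def by (rule fmeasurableI2[OF lmeasurable_cball]) (auto intro: H(1))
  have EH': "E \<subseteq> H'" using H(2) Eb unfolding H'_def by blast
  have o: "outer_measure_of lebesgue E = emeasure lebesgue H'"
  proof (rule antisym)
    have "outer_measure_of lebesgue E \<le> outer_measure_of lebesgue H'" by (rule outer_measure_of_mono[OF EH'])
    also have "\<dots> = emeasure lebesgue H'" using H'm by (simp add: fmeasurable_def)
    finally show "outer_measure_of lebesgue E \<le> emeasure lebesgue H'" .
    have "emeasure lebesgue H' \<le> emeasure lebesgue H" unfolding H'_def by (rule emeasure_mono) (auto intro: H(1))
    then show "emeasure lebesgue H' \<le> outer_measure_of lebesgue E" using H(3) by simp
  qed
  define o' where "o' = measure lebesgue H'"
  have oo: "outer_measure_of lebesgue E = ennreal o'"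
    unfolding o o'_def using H'm by (intro emeasure_eq_ennreal_measure) (auto simp: fmeasurable_def)
  show ?thesis
  proof (cases "o' = 0")
    case True
    then have "negligible H'" using H'm unfolding o'_def by (simp add: negligible_iff_measure)
    then have "negligible E" using EH' negligible_subset by blast
    then show ?thesis by (rule negligible_imp_sets)
  next
    case False
    then have opos: "o' > 0" unfolding o'_def by (simp add: order_le_neq_trans)
    have "\<exists>C. closed C \<and> C \<subseteq> E \<and> ennreal (o' - 1 / Suc n) \<le> emeasure lebesgue C" for n
    proof (rule suslin_inner[OF cK E])
      show "ennreal (o' - 1 / Suc n) < outer_measure_of lebesgue E"
        unfolding oo using opos by (intro ennreal_lessI) auto
    qed
    then obtain C where C: "\<And>n. closed (C n)" "\<And>n. C n \<subseteq> E"
        "\<And>n. ennreal (o' - 1 / Suc n) \<le> emeasure lebesgue (C n)" by metis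
    define D where "D = (\<Union>n. C n)"
    have Dm: "D \<in> sets lebesgue" unfolding D_def using C(1) closed_lebesgue_set by blast
    have Cm: "C n \<in> lmeasurable" for n
      by (rule fmeasurableI2[OF H'm]) (use C(2) EH' closed_lebesgue_set C(1) in auto)
    have mC: "o' - 1 / Suc n \<le> measure lebesgue (C n)" for n
    proof -
      have "emeasure lebesgue (C n) = ennreal (measure lebesgue (C n))"
        using Cm[of n] unfolding fmeasurable_def by (intro emeasure_eq_ennreal_measure) auto
      then show ?thesis using C(3)[of n] by simp
    qed
    have "negligible (E - D)"
      unfolding negligible_outer_le
    proof (intro allI impI)
      fix e :: real assume "e > 0"
      then obtain n where n: "inverse (real (Suc n)) < e" using reals_Archimedean by blast
      have "E - D \<subseteq> H' - C n" using EH' unfolding D_def by blast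
      moreover have "H' - C n \<in> lmeasurable" using H'm Cm by blast
      moreover have "measure lebesgue (H' - C n) \<le> e"
      proof -
        have "measure lebesgue (H' - C n) = o' - measure lebesgue (C n)"
          unfolding o'_def using H'm Cm[of n] C(2)[of n] EH' unfolding fmeasurable_def
          by (intro measure_Diff) auto
        also have "\<dots> \<le> 1 / Suc n" using mC[of n] by simp
        also have "\<dots> \<le> e" using n by (simp add: inverse_eq_divide)
        finally show ?thesis .
      qed
      ultimately show "\<exists>T. E - D \<subseteq> T \<and> T \<in> lmeasurable \<and> measure lebesgue T \<le> e" by blast
    qed
    then have "E - D \<in> sets lebesgue" by (rule negligible_imp_sets)
    moreover have "E = D \<union> (E - D)" using C(2) unfolding D_def by blast
    ultimately show ?thesis using Dm by (metis sets.Un)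
  qed
qed

lemma suslin_lmeas:
  fixes E :: "'a::euclidean_space set"
  assumes "suslin E"
  shows "E \<in> sets lebesgue"
proof -
  obtain K where cK: "\<And>s. compact (K s)" and E: "E = (\<Union>\<sigma>. \<Inter>n. K (pre \<sigma> (Suc n)))"
    using assms(1) unfolding suslin_def by blast
  have "E \<inter> cball 0 (real m) \<in> sets lebesgue" for m :: nat
  proof (rule suslin_bounded_lmeas)
    have "E \<inter> cball 0 (real m) = (\<Union>\<sigma>. \<Inter>n. K (pre \<sigma> (Suc n)) \<inter> cball 0 (real m))"
      unfolding E by blast
    moreover have "\<forall>s. compact (K s \<inter> cball 0 (real m))" using cK by (simp add: compact_Int)
    ultimately show "suslin (E \<inter> cball 0 (real m))"
      unfolding suslin_def by (intro exI[of _ "\<lambda>s. K s \<inter> cball 0 (real m)"]) simp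
  qed auto
  then have "(\<Union>m::nat. E \<inter> cball 0 (real m)) \<in> sets lebesgue" by blast
  moreover have "(\<Union>m::nat. E \<inter> cball 0 (real m)) = E"
  proof (intro equalityI subsetI)
    fix x assume "x \<in> E"
    moreover obtain m :: nat where "norm x \<le> real m" using real_arch_simple by blast
    ultimately show "x \<in> (\<Union>m::nat. E \<inter> cball 0 (real m))" by auto
  qed blast
  ultimately show ?thesis by simp
qed

lemma borel_sum_lmeas:
  fixes A B :: "'a::euclidean_space set"
  assumes "A \<in> sets borel" "B \<in> sets borel"
  shows "{a + b | a b. a \<in> A \<and> b \<in> B} \<in> sets lebesgue"
  using assms by (intro suslin_lmeas suslin_plus) (auto dest: borel_suslin)



lemma mono_borel_ennreal:
  fixes \<phi> :: "ennreal \<Rightarrow> ennreal"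
  assumes "mono \<phi>"
  shows "\<phi> \<in> borel_measurable borel"
proof (rule borel_measurableI_less)
  fix y
  define D where "D = {x. \<phi> x < y}"
  have down: "x \<in> D" if "x \<le> d" "d \<in> D" for x d
    using that assms unfolding D_def mono_def by (auto intro: le_less_trans)
  define s where "s = Sup D"
  have "D \<in> sets borel"
  proof (cases "s \<in> D")
    case True
    have "D = {..s}"
    proof (intro equalityI subsetI)
      fix x assume "x \<in> D" then show "x \<in> {..s}" unfolding s_def by (simp add: Sup_upper)
    next
      fix x assume "x \<in> {..s}" then show "x \<in> D" using down True by simp
    qed
    then show ?thesis by simp
  next
    case False
    have "D = {..<s}"
    proof (intro equalityI subsetI)
      fix x assume x: "x \<in> D"
      then have "x \<le> s" unfolding s_def by (simp add: Sup_upper)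
      moreover have "x \<noteq> s" using x False by blast
      ultimately show "x \<in> {..<s}" by simp
    next
      fix x assume "x \<in> {..<s}"
      then have "x < Sup D" unfolding s_def by simp
      then obtain d where "d \<in> D" "x < d" by (auto simp: less_Sup_iff)
      then show "x \<in> D" using down by (meson less_imp_le)
    qed
    then show ?thesis by simp
  qed
  then show "{x \<in> space borel. \<phi> x < y} \<in> sets borel" unfolding D_def by simp
qed

lemma left_cont_SUP:
  fixes \<phi> :: "ennreal \<Rightarrow> ennreal"
  assumes mono: "mono \<phi>" and lc: "\<And>x. continuous (at_left x) \<phi>" and inc: "incseq a"
  shows "\<phi> (SUP n. a n) = (SUP n. \<phi> (a n))"
proof (cases "\<exists>n. a n = (SUP n. a n)")
  case True
  then obtain n where n: "a n = (SUP n. a n)" by blast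
  show ?thesis
  proof (rule antisym)
    show "\<phi> (SUP n. a n) \<le> (SUP n. \<phi> (a n))" using n by (metis SUP_upper UNIV_I)
    show "(SUP n. \<phi> (a n)) \<le> \<phi> (SUP n. a n)"
      by (rule SUP_least) (use mono in \<open>auto intro: monoD SUP_upper\<close>)
  qed
next
  case False
  define y where "y = (SUP n. a n)"
  have lim: "a \<longlonglongrightarrow> y" unfolding y_def by (rule LIMSEQ_SUP[OF inc])
  have lt: "\<forall>n. a n < y" using False unfolding y_def by (metis SUP_upper UNIV_I order_le_neq_trans)
  have fl: "filterlim a (at_left y) sequentially"
    by (rule tendsto_imp_filterlim_at_left[OF lim]) (use lt in auto)
  have "(\<phi> \<longlongrightarrow> \<phi> y) (at_left y)" using lc[of y] by (simp add: continuous_within)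
  then have "(\<lambda>n. \<phi> (a n)) \<longlonglongrightarrow> \<phi> y" using fl by (rule filterlim_compose)
  moreover have "(\<lambda>n. \<phi> (a n)) \<longlonglongrightarrow> (SUP n. \<phi> (a n))"
    by (rule LIMSEQ_SUP) (use inc mono in \<open>auto simp: incseq_def mono_def\<close>)
  ultimately show ?thesis unfolding y_def using LIMSEQ_unique by blast
qed

lemma nn_integral_translate:
  fixes u :: "'a::euclidean_space \<Rightarrow> ennreal"
  assumes u[measurable]: "u \<in> borel_measurable lebesgue"
  shows "(\<integral>\<^sup>+x. u (x + t) \<partial>lebesgue) = (\<integral>\<^sup>+x. u x \<partial>lebesgue)"
proof -
  have T: "(\<lambda>x. t + (\<Sum>j\<in>Basis. (1 * (x \<bullet> j)) *\<^sub>R j)) = (\<lambda>x::'a. t + x)"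
    by (simp add: euclidean_representation)
  have leb: "lebesgue = distr lebesgue lebesgue (\<lambda>x::'a. t + x)"
    using lebesgue_affine_euclidean[of "\<lambda>_. 1" t] unfolding T by (simp add: density_1)
  have meas: "(\<lambda>x::'a. t + x) \<in> lebesgue \<rightarrow>\<^sub>M lebesgue"
    using lebesgue_affine_measurable[of "\<lambda>_. 1" t] unfolding T by simp
  have "(\<integral>\<^sup>+x. u x \<partial>lebesgue) = (\<integral>\<^sup>+x. u x \<partial>distr lebesgue lebesgue (\<lambda>x::'a. t + x))"
    by (subst leb) (rule refl)
  also have "\<dots> = (\<integral>\<^sup>+x. u (t + x) \<partial>lebesgue)"
    by (rule nn_integral_distr[OF meas]) simp
  finally show ?thesis by (simp add: add.commute)
qed

lemma recip_antimono: "0 \<le> a \<Longrightarrow> a \<le> b \<Longrightarrow> recip b \<le> recip a"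
  unfolding recip_def by (intro e2ennreal_mono ereal_inverse_antimono)

lemma recip_pos: "v > 0 \<Longrightarrow> recip (ereal v) = ennreal (1 / v)"
  unfolding recip_def by (simp add: inverse_eq_divide)

lemma recip_zero: "recip 0 = top"
  unfolding recip_def by (simp add: zero_ereal_def)

lemma recip_inf: "recip \<infinity> = 0"
  unfolding recip_def by simp (simp only: zero_ereal_def e2ennreal_ereal ennreal_0)

lemma recip_measurable[measurable (raw)]:
  "F \<in> borel_measurable M \<Longrightarrow> (\<lambda>x. recip (F x)) \<in> borel_measurable M"
  unfolding recip_def by measurable



lemma key_pointwise:
  fixes r :: real and z :: ereal
  assumes r: "r > 0" and z: "0 \<le> z"
  shows "ennreal (1 / (2 * r)) * recip z \<le> (SUP n. ennreal (1 / r) * recip (2 * z + ereal (1 / Suc n)))"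
proof (cases z)
  case PInf then show ?thesis by (simp add: recip_inf)
next
  case MInf then show ?thesis using z by simp
next
  case (real u)
  then have u: "u \<ge> 0" using z by simp
  have tm: "ennreal (1 / r) * recip (2 * z + ereal (1 / Suc n)) = ennreal (1 / (r * (2 * u + 1 / Suc n)))" for n
  proof -
    have "2 * z + ereal (1 / Suc n) = ereal (2 * u + 1 / Suc n)" using real by simp
    moreover have "2 * u + 1 / Suc n > 0" using u by (simp add: add_nonneg_pos)
    ultimately have "recip (2 * z + ereal (1 / Suc n)) = ennreal (1 / (2 * u + 1 / Suc n))"
      by (simp add: recip_pos)
    then show ?thesis using r u by (simp add: ennreal_mult''[symmetric])
  qed
  show ?thesis
  proof (rule dense_le)
    fix y assume y: "y < ennreal (1 / (2 * r)) * recip z"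
    then have "y \<noteq> top" by (metis leD top_greatest)
    then obtain y' where y': "y = ennreal y'" "y' \<ge> 0" by (cases y) auto
    show "y \<le> (SUP n. ennreal (1 / r) * recip (2 * z + ereal (1 / Suc n)))"
    proof (cases "y' = 0")
      case True then show ?thesis using y' by simp
    next
      case False
      then have ypos: "y' > 0" using y' by simp
      have small: "y' * r * 2 * u < 1"
      proof (cases "u = 0")
        case True then show ?thesis by simp
      next
        case False
        then have "u > 0" using u by simp
        then have "recip z = ennreal (1 / u)" using real by (simp add: recip_pos)
        then have "ennreal (1 / (2 * r)) * recip z = ennreal (1 / (2 * r * u))"
          using r \<open>u > 0\<close> by (simp add: ennreal_mult''[symmetric])
        then have "y' < 1 / (2 * r * u)" using y y' by (simp add: ennreal_less_iff)
        then show ?thesis using r \<open>u > 0\<close> by (simp add: less_divide_eq mult_ac)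
      qed
      define \<delta> where "\<delta> = 1 - y' * r * 2 * u"
      have dpos: "\<delta> > 0" using small unfolding \<delta>_def by simp
      have "\<delta> / (r * y') > 0" using dpos r ypos by simp
      then obtain n where n: "inverse (real (Suc n)) < \<delta> / (r * y')" using reals_Archimedean by blast
      then have "r * y' * (1 / Suc n) < \<delta>" using r ypos by (simp add: inverse_eq_divide less_divide_eq mult_ac)
      then have "y' * (r * (2 * u + 1 / Suc n)) < 1" unfolding \<delta>_def by (simp add: algebra_simps)
      moreover have "r * (2 * u + 1 / Suc n) > 0" using r u by (simp add: add_nonneg_pos)
      ultimately have "y' \<le> 1 / (r * (2 * u + 1 / Suc n))" by (simp add: le_divide_eq)
      then have "y \<le> ennreal (1 / r) * recip (2 * z + ereal (1 / Suc n))" unfolding tm y'(1) by (rule ennreal_leI)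
      also have "\<dots> \<le> (SUP n. ennreal (1 / r) * recip (2 * z + ereal (1 / Suc n)))" by (rule SUP_upper) simp
      finally show ?thesis .
    qed
  qed
qed



lemma Inf_times2_ennreal:
  fixes S :: "real set"
  shows "Inf ((\<lambda>r. 2 * ennreal r) ` S) = 2 * Inf (ennreal ` S)"
proof (cases "S = {}")
  case True then show ?thesis by (simp add: ennreal_mult_top)
next
  case False
  have mono: "mono (\<lambda>x::ennreal. 2 * x)" by (simp add: mono_def mult_left_mono)
  have cont: "continuous (at_right (Inf (ennreal ` S))) (\<lambda>x::ennreal. 2 * x)"
    unfolding continuous_within
    by (intro ennreal_tendsto_cmult tendsto_ident_at) simp
  have "2 * Inf (ennreal ` S) = (INF s\<in>ennreal ` S. 2 * s)"
    by (rule continuous_at_Inf_mono[OF mono cont]) (use False in auto)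
  then show ?thesis by (simp add: image_image)
qed

lemma lux_transfer:
  fixes F k :: "'a::euclidean_space \<Rightarrow> ereal" and \<phi> :: "ennreal \<Rightarrow> ennreal"
  assumes yg: "young \<phi>"
    and Fm[measurable]: "F \<in> borel_measurable lebesgue" and km[measurable]: "k \<in> borel_measurable lebesgue"
    and F0: "\<And>x. 0 \<le> F x" and k0: "\<And>x. 0 \<le> k x"
    and shift: "\<And>e. e > 0 \<Longrightarrow> \<exists>t. \<forall>x. k (x + t) \<le> 2 * F x + ereal e"
  shows "luxemburg \<phi> (\<lambda>x. recip (F x)) \<le> 2 * luxemburg \<phi> (\<lambda>x. recip (k x))"
proof -
  from yg have mono: "mono \<phi>" and lc: "\<And>x. continuous (at_left x) \<phi>" unfolding young_def by auto
  have \<phi>m[measurable]: "\<phi> \<in> borel_measurable borel" by (rule mono_borel_ennreal[OF mono])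
  define Sk where "Sk = {r::real. r > 0 \<and> (\<integral>\<^sup>+ x. \<phi> (ennreal (1 / r) * recip (k x)) \<partial>lebesgue) \<le> 1}"
  define SF where "SF = {r::real. r > 0 \<and> (\<integral>\<^sup>+ x. \<phi> (ennreal (1 / r) * recip (F x)) \<partial>lebesgue) \<le> 1}"
  have step: "2 * r \<in> SF" if "r \<in> Sk" for r
  proof -
    from that have r: "r > 0" and I: "(\<integral>\<^sup>+ x. \<phi> (ennreal (1 / r) * recip (k x)) \<partial>lebesgue) \<le> 1"
      unfolding Sk_def by auto
    define H where "H n x = ennreal (1 / r) * recip (2 * F x + ereal (1 / Suc n))" for n x
    have Hm[measurable]: "(\<lambda>x. \<phi> (H n x)) \<in> borel_measurable lebesgue" for n
      unfolding H_def by measurable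
    have Hle: "(\<integral>\<^sup>+ x. \<phi> (H n x) \<partial>lebesgue) \<le> 1" for n
    proof -
      obtain t where t: "\<And>x. k (x + t) \<le> 2 * F x + ereal (1 / Suc n)"
        using shift[of "1 / Suc n"] by auto
      have "H n x \<le> ennreal (1 / r) * recip (k (x + t))" for x
        unfolding H_def by (intro mult_left_mono recip_antimono k0 t) simp
      then have "(\<integral>\<^sup>+ x. \<phi> (H n x) \<partial>lebesgue) \<le> (\<integral>\<^sup>+ x. \<phi> (ennreal (1 / r) * recip (k (x + t))) \<partial>lebesgue)"
        by (intro nn_integral_mono monoD[OF mono])
      also have "\<dots> = (\<integral>\<^sup>+ x. \<phi> (ennreal (1 / r) * recip (k x)) \<partial>lebesgue)"
        by (rule nn_integral_translate[where u="\<lambda>x. \<phi> (ennreal (1 / r) * recip (k x))"]) measurable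
      finally show ?thesis using I by simp
    qed
    have Hinc: "H n x \<le> H m x" if "n \<le> m" for n m x
    proof -
      have "ereal (1 / Suc m) \<le> ereal (1 / Suc n)" using that by (simp add: frac_le)
      then have "2 * F x + ereal (1 / Suc m) \<le> 2 * F x + ereal (1 / Suc n)" by (rule add_left_mono)
      moreover have "0 \<le> 2 * F x + ereal (1 / Suc m)" using F0[of x] by simp
      ultimately show ?thesis unfolding H_def by (intro mult_left_mono recip_antimono) simp_all
    qed
    have inc: "incseq (\<lambda>n x. \<phi> (H n x))"
      unfolding incseq_def le_fun_def using Hinc monoD[OF mono] by blast
    have "(\<integral>\<^sup>+ x. \<phi> (ennreal (1 / (2 * r)) * recip (F x)) \<partial>lebesgue) \<le> (\<integral>\<^sup>+ x. (SUP n. \<phi> (H n x)) \<partial>lebesgue)"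
    proof (rule nn_integral_mono)
      fix x
      have "ennreal (1 / (2 * r)) * recip (F x) \<le> (SUP n. H n x)"
        unfolding H_def by (rule key_pointwise[OF r F0])
      then have "\<phi> (ennreal (1 / (2 * r)) * recip (F x)) \<le> \<phi> (SUP n. H n x)" by (rule monoD[OF mono])
      also have "\<dots> = (SUP n. \<phi> (H n x))"
        by (rule left_cont_SUP[OF mono lc]) (use Hinc in \<open>auto simp: incseq_def\<close>)
      finally show "\<phi> (ennreal (1 / (2 * r)) * recip (F x)) \<le> (SUP n. \<phi> (H n x))" .
    qed
    also have "\<dots> = (SUP n. \<integral>\<^sup>+ x. \<phi> (H n x) \<partial>lebesgue)"
      by (rule nn_integral_monotone_convergence_SUP[OF inc Hm])
    also have "\<dots> \<le> 1" using Hle by (simp add: SUP_least)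
    finally show ?thesis unfolding SF_def using r by simp
  qed
  have "Inf (ennreal ` SF) \<le> Inf ((\<lambda>r. 2 * ennreal r) ` Sk)"
  proof (rule Inf_greatest)
    fix y assume "y \<in> (\<lambda>r. 2 * ennreal r) ` Sk"
    then obtain r where r: "r \<in> Sk" "y = 2 * ennreal r" by blast
    then have "r > 0" unfolding Sk_def by simp
    have "Inf (ennreal ` SF) \<le> ennreal (2 * r)" using step[OF r(1)] by (simp add: Inf_lower)
    also have "ennreal (2 * r) = y" using r \<open>r > 0\<close> by (simp add: ennreal_mult)
    finally show "Inf (ennreal ` SF) \<le> y" .
  qed
  also have "\<dots> = 2 * Inf (ennreal ` Sk)" by (rule Inf_times2_ennreal)
  finally show ?thesis unfolding luxemburg_def Sk_def SF_def .
qed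



lemma borel_to_lebesgue: "f \<in> borel_measurable borel \<Longrightarrow> (f :: 'a::euclidean_space \<Rightarrow> 'b::topological_space) \<in> borel_measurable lebesgue"
  by (rule measurable_completion) simp

theorem corollary8:
  fixes f g :: "'a::euclidean_space \<Rightarrow> ereal"
  assumes f_meas: "f \<in> borel_measurable borel"
    and g_meas: "g \<in> borel_measurable borel"
    and g_nonneg: "\<forall>x. 0 \<le> g x"
    and f_not_inf: "\<exists>x. f x \<noteq> \<infinity>"
    and g_not_inf: "\<exists>x. g x \<noteq> \<infinity>"
  defines "mfp \<equiv> (INF x. max (f x) 0)"
    and "mg \<equiv> (INF x. g x)"
  defines "m \<equiv> (mfp - mg) / 2"
  shows "(0 \<le> mfp + mg \<and> mfp + mg < \<infinity>) \<and>
     (\<lambda>x. max (f x) 0 - m) \<in> borel_measurable lebesgue \<and>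
     (\<lambda>x. g x + m) \<in> borel_measurable lebesgue \<and>
     maxconv f g \<in> borel_measurable lebesgue \<and>
     (\<forall>x. 0 \<le> max (f x) 0 - m) \<and>
     (\<forall>x. 0 \<le> g x + m) \<and>
     (\<forall>x. 0 \<le> maxconv f g x) \<and>
     (\<forall>\<phi>. young \<phi> \<longrightarrow>
           luxemburg \<phi> (\<lambda>x. recip (max (f x) 0 - m)) + luxemburg \<phi> (\<lambda>x. recip (g x + m))
             \<le> 4 * luxemburg \<phi> (\<lambda>x. recip (maxconv f g x)))"
proof -
  note [measurable] = f_meas g_meas
  have fl[measurable]: "f \<in> borel_measurable lebesgue" using f_meas by (rule borel_to_lebesgue)
  have gl[measurable]: "g \<in> borel_measurable lebesgue" using g_meas by (rule borel_to_lebesgue)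
  have mfp0: "0 \<le> mfp" unfolding mfp_def by (rule INF_greatest) simp
  obtain x0 where x0: "f x0 \<noteq> \<infinity>" using f_not_inf by blast
  have "mfp \<le> max (f x0) 0" unfolding mfp_def by (rule INF_lower) simp
  also have "\<dots> < \<infinity>" using x0 by (cases "f x0") (auto simp: max_def)
  finally have mfpfin: "mfp < \<infinity>" .
  obtain a where a: "mfp = ereal a" "a \<ge> 0" using mfp0 mfpfin by (cases mfp) auto
  have mg0: "0 \<le> mg" unfolding mg_def using g_nonneg by (intro INF_greatest) simp
  obtain y0 where y0: "g y0 \<noteq> \<infinity>" using g_not_inf by blast
  have "mg \<le> g y0" unfolding mg_def by (rule INF_lower) simp
  also have "\<dots> < \<infinity>" using y0 by (cases "g y0") auto
  finally have mgfin: "mg < \<infinity>" .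
  obtain c where c: "mg = ereal c" "c \<ge> 0" using mg0 mgfin by (cases mg) auto
  have mval: "m = ereal ((a - c) / 2)" unfolding m_def a c by simp
  have part1: "0 \<le> mfp + mg \<and> mfp + mg < \<infinity>" using a c by simp
  have pa: "ereal a \<le> max (f x) 0" for x
    unfolding a(1)[symmetric] mfp_def by (rule INF_lower) simp
  have gc: "ereal c \<le> g x" for x
    unfolding c(1)[symmetric] mg_def by (rule INF_lower) simp
  have F0: "0 \<le> max (f x) 0 - m" for x
  proof (cases "max (f x) 0")
    case (real p)
    then show ?thesis using pa[of x] c a unfolding mval by simp
  next
    case PInf then show ?thesis unfolding mval by simp
  next
    case MInf then show ?thesis by (metis max.cobounded2 ereal_less_eq(2) not_MInfty_nonneg)
  qed
  have G0: "0 \<le> g x + m" for x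
  proof (cases "g x")
    case (real q)
    have "c \<le> q" using gc[of x] real by simp
    then have "0 \<le> q + (a - c) / 2" using a(2) c(2) by (simp add: field_simps)
    then show ?thesis using real unfolding mval by simp
  next
    case PInf then show ?thesis unfolding mval by simp
  next
    case MInf then show ?thesis using g_nonneg by (metis ereal_less_eq(2) not_MInfty_nonneg)
  qed
  have K0: "0 \<le> maxconv f g x" for x
    unfolding maxconv_def by (rule INF_greatest) (use g_nonneg in \<open>auto intro: max.coboundedI2\<close>)
  have Fm: "(\<lambda>x. max (f x) 0 - m) \<in> borel_measurable lebesgue" by measurable
  have Gm: "(\<lambda>x. g x + m) \<in> borel_measurable lebesgue" by measurable
  have Km: "maxconv f g \<in> borel_measurable lebesgue"
  proof (rule borel_measurableI_less)
    fix y :: ereal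
    have "{x \<in> space lebesgue. maxconv f g x < y} = {u + v | u v. u \<in> {z. f z < y} \<and> v \<in> {z. g z < y}}"
    proof (intro equalityI subsetI)
      fix x assume "x \<in> {x \<in> space lebesgue. maxconv f g x < y}"
      then have "(INF z. max (f (x - z)) (g z)) < y" unfolding maxconv_def by simp
      then obtain z where "max (f (x - z)) (g z) < y" by (auto simp: INF_less_iff)
      then have "f (x - z) < y" "g z < y" by auto
      moreover have "x = (x - z) + z" by simp
      ultimately show "x \<in> {u + v | u v. u \<in> {z. f z < y} \<and> v \<in> {z. g z < y}}" by blast
    next
      fix x assume "x \<in> {u + v | u v. u \<in> {z. f z < y} \<and> v \<in> {z. g z < y}}"
      then obtain u v where uv: "x = u + v" "f u < y" "g v < y" by blast
      have "maxconv f g x \<le> max (f (x - v)) (g v)" unfolding maxconv_def by (rule INF_lower) simp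
      also have "\<dots> < y" using uv by simp
      finally show "x \<in> {x \<in> space lebesgue. maxconv f g x < y}" by simp
    qed
    also have "\<dots> \<in> sets lebesgue"
      by (rule borel_sum_lmeas) measurable
    finally show "{x \<in> space lebesgue. maxconv f g x < y} \<in> sets lebesgue" .
  qed
  have shiftF: "\<exists>t. \<forall>x. maxconv f g (x + t) \<le> 2 * (max (f x) 0 - m) + ereal e" if e: "e > 0" for e
  proof -
    have "(INF x. g x) < ereal (c + e)" using c e unfolding mg_def[symmetric] by simp
    then obtain t where t: "g t < ereal (c + e)" by (auto simp: INF_less_iff)
    have "maxconv f g (x + t) \<le> 2 * (max (f x) 0 - m) + ereal e" for x
    proof -
      have "maxconv f g (x + t) \<le> max (f (x + t - t)) (g t)" unfolding maxconv_def by (rule INF_lower) simp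
      also have "\<dots> = max (f x) (g t)" by simp
      also have "\<dots> \<le> 2 * (max (f x) 0 - m) + ereal e"
      proof (cases "max (f x) 0")
        case (real p)
        have "ereal a \<le> ereal p" using pa[of x] real by simp
        then have ap: "a \<le> p" by simp
        have p0: "0 \<le> p" using real by (metis ereal_less_eq(5) max.cobounded2)
        have "f x \<le> ereal p" using real by (metis max.cobounded1)
        moreover have "2 * (max (f x) 0 - m) + ereal e = ereal (2 * (p - (a - c) / 2) + e)"
          unfolding real mval by simp
        moreover have "p \<le> 2 * (p - (a - c) / 2) + e" using ap c e by (simp add: field_simps)
        moreover have "c + e \<le> 2 * (p - (a - c) / 2) + e" using ap p0 a by (simp add: field_simps)
        ultimately show ?thesis using t by (auto intro: order_trans less_imp_le)
      next
        case PInf then show ?thesis unfolding mval by simp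
      next
        case MInf then show ?thesis by (metis max.cobounded2 ereal_less_eq(2) not_MInfty_nonneg)
      qed
      finally show ?thesis .
    qed
    then show ?thesis by blast
  qed
  have shiftG: "\<exists>t. \<forall>x. maxconv f g (x + t) \<le> 2 * (g x + m) + ereal e" if e: "e > 0" for e
  proof -
    have "(INF x. max (f x) 0) < ereal (a + e)" using a e unfolding mfp_def[symmetric] by simp
    then obtain t where t: "max (f t) 0 < ereal (a + e)" by (auto simp: INF_less_iff)
    have "maxconv f g (x + t) \<le> 2 * (g x + m) + ereal e" for x
    proof -
      have "maxconv f g (x + t) \<le> max (f (x + t - x)) (g x)" unfolding maxconv_def by (rule INF_lower) simp
      also have "\<dots> = max (f t) (g x)" by simp
      also have "\<dots> \<le> 2 * (g x + m) + ereal e"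
      proof (cases "g x")
        case (real q)
        have cq: "c \<le> q" using gc[of x] real by simp
        have "f t \<le> ereal (a + e)" using t by (metis max.cobounded1 order_trans less_imp_le)
        moreover have "2 * (g x + m) + ereal e = ereal (2 * (q + (a - c) / 2) + e)"
          unfolding real mval by simp
        moreover have "q \<le> 2 * (q + (a - c) / 2) + e" using cq a c e by (simp add: field_simps)
        moreover have "a + e \<le> 2 * (q + (a - c) / 2) + e" using cq c by (simp add: field_simps)
        ultimately show ?thesis using real by (auto intro: order_trans)
      next
        case PInf then show ?thesis unfolding mval by simp
      next
        case MInf then show ?thesis using g_nonneg by (metis ereal_less_eq(2) not_MInfty_nonneg)
      qed
      finally show ?thesis .
    qed
    then show ?thesis by blast
  qed
  have lux: "luxemburg \<phi> (\<lambda>x. recip (max (f x) 0 - m)) + luxemburg \<phi> (\<lambda>x. recip (g x + m))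
             \<le> 4 * luxemburg \<phi> (\<lambda>x. recip (maxconv f g x))" if yg: "young \<phi>" for \<phi>
  proof -
    have 1: "luxemburg \<phi> (\<lambda>x. recip (max (f x) 0 - m)) \<le> 2 * luxemburg \<phi> (\<lambda>x. recip (maxconv f g x))"
      by (rule lux_transfer[OF yg Fm Km F0 K0 shiftF])
    have 2: "luxemburg \<phi> (\<lambda>x. recip (g x + m)) \<le> 2 * luxemburg \<phi> (\<lambda>x. recip (maxconv f g x))"
      by (rule lux_transfer[OF yg Gm Km G0 K0 shiftG])
    have "luxemburg \<phi> (\<lambda>x. recip (max (f x) 0 - m)) + luxemburg \<phi> (\<lambda>x. recip (g x + m))
        \<le> 2 * luxemburg \<phi> (\<lambda>x. recip (maxconv f g x)) + 2 * luxemburg \<phi> (\<lambda>x. recip (maxconv f g x))"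
      using 1 2 by (rule add_mono)
    also have "\<dots> = 4 * luxemburg \<phi> (\<lambda>x. recip (maxconv f g x))"
      by (simp add: distrib_right[symmetric])
    finally show ?thesis .
  qed
  show ?thesis using part1 Fm Gm Km F0 G0 K0 lux by blast
qed


end
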